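(* Let $(X,d)$ be a compact metric space, $f_{0,\infty}=\{f_n\}_{n=0}^{\infty}$ a sequence of continuous self-maps of $X$, and $A=\{a_i\}_{i=1}^{\infty}\in\mathcal{S}$. Let $\{\alpha_n\}_{n=0}^{\infty}$ be a sequence of open covers of $X$ with $\mathrm{diam}(\alpha_n)\to0$ as $n\to\infty$. Then \[\lim_{n\to\infty}h_{A}(f_{0,\infty},\alpha_n)=h_{A}(f_{0,\infty}),\] and consequently \[h_{A}(f_{0,\infty})=\lim_{\delta\to0}\sup\{h_{A}(f_{0,\infty},\alpha): \alpha \text{ an open cover of } X,\ \mathrm{diam}(\alpha)<\delta\}.\]
   Context: For $i\ge0$, $n\ge1$ write $f_i^n=f_{i+n-1}\circ\cdots\circ f_i$, $f_i^0=\mathrm{id}_X$, $f_i^{-n}(B)=(f_i^n)^{-1}(B)$. $\mathcal S$ is the set of strictly increasing sequences of nonnegative integers. For open covers, $\bigvee_{i=1}^n\mathscr A_i=\{\bigcap_i U_i:U_i\in\mathscr A_i\}$, $f_0^{-a}\mathscr A=\{f_0^{-a}(U):U\in\mathscr A\}$, and $\mathcal N(\mathscr B)$ is the minimal cardinality of a subcover of $\mathscr B$. For an open cover $\mathscr A$, $h_A(f_{0,\infty},\mathscr A)=\limsup_{n\to\infty}\frac1n\log\mathcal N(\bigvee_{i=1}^n f_0^{-a_i}\mathscr A)$ and $h_A(f_{0,\infty})=\sup_{\mathscr A}h_A(f_{0,\infty},\mathscr A)$ over finite open covers. The diameter of a cover $\alpha$ is $\mathrm{diam}(\alpha)=\sup_{U\in\alpha}\sup_{x,y\in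 U}d(x,y)$. *)

theory Defs
  imports "HOL-Analysis.Analysis"
begin

fun fiter :: "(nat \<Rightarrow> 'a \<Rightarrow> 'a) \<Rightarrow> nat \<Rightarrow> nat \<Rightarrow> 'a \<Rightarrow> 'a" where
  "fiter f i 0 = id"
| "fiter f i (Suc n) = f (i + n) \<circ> fiter f i n"

definition open_cover :: "'a::metric_space set \<Rightarrow> 'a set set \<Rightarrow> bool" where
  "open_cover X \<A> \<longleftrightarrow> (\<forall>U\<in>\<A>. openin (top_of_set X) U) \<and> \<Union>\<A> = X"

definition preimage_cover :: "'a set \<Rightarrow> (nat \<Rightarrow> 'a \<Rightarrow> 'a) \<Rightarrow> nat \<Rightarrow> 'a set set \<Rightarrow> 'a set set" where
  "preimage_cover X f a \<A> = (\<lambda>U. {x\<in>X. fiter f 0 a x \<in> U}) ` \<A>"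

definition join_covers :: "'a set \<Rightarrow> nat \<Rightarrow> (nat \<Rightarrow> 'a set set) \<Rightarrow> 'a set set" where
  "join_covers X n \<A> = {(\<Inter>i\<in>{1..n}. U i) \<inter> X | U. \<forall>i\<in>{1..n}. U i \<in> \<A> i}"

definition min_subcover_card :: "'a set \<Rightarrow> 'a set set \<Rightarrow> nat" where
  "min_subcover_card X \<B> = (LEAST k. \<exists>\<C>\<subseteq>\<B>. finite \<C> \<and> \<Union>\<C> = X \<and> card \<C> = k)"

definition hA_cover :: "'a::metric_space set \<Rightarrow> (nat \<Rightarrow> 'a \<Rightarrow> 'a) \<Rightarrow> (nat \<Rightarrow> nat) \<Rightarrow> 'a set set \<Rightarrow> ereal" where
  "hA_cover X f a \<A> = limsup (\<lambda>n. ereal (ln (real (min_subcover_card X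
       (join_covers X n (\<lambda>i. preimage_cover X f (a i) \<A>)))) / real n))"

definition hA :: "'a::metric_space set \<Rightarrow> (nat \<Rightarrow> 'a \<Rightarrow> 'a) \<Rightarrow> (nat \<Rightarrow> nat) \<Rightarrow> ereal" where
  "hA X f a = (SUP \<A>\<in>{\<A>. open_cover X \<A> \<and> finite \<A>}. hA_cover X f a \<A>)"

definition cover_diam :: "'a::metric_space set set \<Rightarrow> real" where
  "cover_diam \<A> = (SUP U\<in>\<A>. diameter U)"

end

theory Submission
  imports Defs
begin

lemma fiter_props:
  assumes "\<And>n. continuous_on X (f n)" and "\<And>n. f n ` X \<subseteq> X"
  shows "continuous_on X (fiter f i k) \<and> fiter f i k ` X \<subseteq> X"
proof (induction k)
  case 0
  then show ?case by simp
next
  case (Suc k)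
  then show ?case using assms
    by (auto intro!: continuous_on_compose2[of X "f (i+k)" X "fiter f i k"] simp: image_subset_iff)
qed

lemma join_memI:
  assumes "\<And>i. i \<in> {1..n} \<Longrightarrow> U i \<in> \<A> i"
  shows "(\<Inter>i\<in>{1..n}. U i) \<inter> X \<in> join_covers X n \<A>"
  unfolding join_covers_def using assms by (intro CollectI exI[of _ U]) simp

lemma join_memE:
  assumes "E \<in> join_covers X n \<A>"
  obtains U where "E = (\<Inter>i\<in>{1..n}. U i) \<inter> X" "\<forall>i\<in>{1..n}. U i \<in> \<A> i"
  using assms unfolding join_covers_def by blast

lemma pre_memI:
  assumes "V \<in> \<A>"
  shows "{x\<in>X. fiter f 0 k x \<in> V} \<in> preimage_cover X f k \<A>"
  unfolding preimage_cover_def using assms by (rule imageI)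

lemma fiter_maps:
  assumes "\<And>n. f n ` X \<subseteq> X" and "x \<in> X"
  shows "fiter f i k x \<in> X"
  using assms(2) by (induction k) (use assms(1) in auto)

lemma preimage_openin:
  assumes "\<And>n. continuous_on X (f n)" and "\<And>n. f n ` X \<subseteq> X"
    and "openin (top_of_set X) V"
  shows "openin (top_of_set X) {x\<in>X. fiter f 0 k x \<in> V}"
proof -
  have "openin (top_of_set X) (X \<inter> fiter f 0 k -` V)"
  proof -
    have "continuous_on X (fiter f 0 k) \<and> fiter f 0 k ` X \<subseteq> X"
      by (rule fiter_props) (use assms in auto)
    then show ?thesis using assms(3) by (intro continuous_openin_preimage) auto
  qed
  moreover have "X \<inter> fiter f 0 k -` V = {x\<in>X. fiter f 0 k x \<in> V}" by auto
  ultimately show ?thesis by simp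
qed

lemma join_openin:
  assumes "\<And>n. continuous_on X (f n)" and "\<And>n. f n ` X \<subseteq> X"
    and "open_cover X \<A>" and "E \<in> join_covers X n (\<lambda>i. preimage_cover X f (a i) \<A>)"
  shows "openin (top_of_set X) E"
proof -
  obtain U where E: "E = (\<Inter>i\<in>{1..n}. U i) \<inter> X"
    and U: "\<forall>i\<in>{1..n}. U i \<in> preimage_cover X f (a i) \<A>"
    using assms(4) by (rule join_memE)
  have opU: "openin (top_of_set X) (U i)" if "i \<in> {1..n}" for i
  proof -
    have "U i \<in> preimage_cover X f (a i) \<A>" using U that by blast
    then obtain V where "U i = {x\<in>X. fiter f 0 (a i) x \<in> V}" "V \<in> \<A>"
      unfolding preimage_cover_def by (rule imageE)
    then show ?thesis using preimage_openin[where X=X and f=f, OF assms(1,2)] assms(3)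
      unfolding open_cover_def by auto
  qed
  have fin: "finite {1..n}" by simp
  have "openin (top_of_set X) ((\<Inter>i\<in>{1..n}. U i) \<inter> topspace (top_of_set X))"
    using openin_INT[OF fin, of "top_of_set X" U] opU by blast
  then show ?thesis using E by simp
qed

lemma join_covers_X:
  assumes "\<And>n. f n ` X \<subseteq> X" and "open_cover X \<A>"
  shows "\<Union>(join_covers X n (\<lambda>i. preimage_cover X f (a i) \<A>)) = X"
proof
  show "\<Union>(join_covers X n (\<lambda>i. preimage_cover X f (a i) \<A>)) \<subseteq> X"
    unfolding join_covers_def by auto
next
  show "X \<subseteq> \<Union>(join_covers X n (\<lambda>i. preimage_cover X f (a i) \<A>))"
  proof
    fix x assume x: "x \<in> X"
    have "\<forall>i. \<exists>V\<in>\<A>. fiter f 0 (a i) x \<in> V"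
    proof
      fix i
      have "fiter f 0 (a i) x \<in> X"
        using fiter_maps[where X=X and f=f, OF assms(1) x] .
      then show "\<exists>V\<in>\<A>. fiter f 0 (a i) x \<in> V"
        using assms(2) unfolding open_cover_def by blast
    qed
    then obtain V where V: "\<And>i. V i \<in> \<A>" "\<And>i. fiter f 0 (a i) x \<in> V i" by metis
    define U where "U i = {y\<in>X. fiter f 0 (a i) y \<in> V i}" for i
    have "(\<Inter>i\<in>{1..n}. U i) \<inter> X \<in> join_covers X n (\<lambda>i. preimage_cover X f (a i) \<A>)"
      unfolding U_def by (intro join_memI pre_memI V)
    moreover have "x \<in> (\<Inter>i\<in>{1..n}. U i) \<inter> X" using x V unfolding U_def by auto
    ultimately show "x \<in> \<Union>(join_covers X n (\<lambda>i. preimage_cover X f (a i) \<A>))" by blast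
  qed
qed

lemma refine_N:
  assumes "compact X" "\<And>n. continuous_on X (f n)" and "\<And>n. f n ` X \<subseteq> X"
    and "open_cover X \<A>" "open_cover X \<B>"
    and ref: "\<And>V. V \<in> \<A> \<Longrightarrow> V \<noteq> {} \<Longrightarrow> \<exists>W\<in>\<B>. V \<subseteq> W"
  shows "min_subcover_card X (join_covers X n (\<lambda>i. preimage_cover X f (a i) \<B>))
       \<le> min_subcover_card X (join_covers X n (\<lambda>i. preimage_cover X f (a i) \<A>))"
proof -
  let ?JA = "join_covers X n (\<lambda>i. preimage_cover X f (a i) \<A>)"
  let ?JB = "join_covers X n (\<lambda>i. preimage_cover X f (a i) \<B>)"
  have ex: "\<exists>C\<subseteq>?JA. finite C \<and> \<Union>C = X"
  proof -
    have o: "\<forall>c\<in>?JA. openin (top_of_set X) c"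
      using join_openin[where X=X and f=f, OF assms(2,3,4)] by blast
    have "X \<subseteq> \<Union>?JA" using join_covers_X[where X=X and f=f, OF assms(3,4)] by simp
    then have "\<exists>D\<subseteq>?JA. finite D \<and> X \<subseteq> \<Union>D"
      using compact_eq_openin_cover[THEN iffD1, OF assms(1), rule_format, of ?JA] o by blast
    then obtain D where "D \<subseteq> ?JA" "finite D" "X \<subseteq> \<Union>D" by blast
    moreover have "\<Union>D \<subseteq> X" using \<open>D \<subseteq> ?JA\<close> join_covers_X[where X=X and f=f, OF assms(3,4)] by blast
    ultimately show ?thesis by blast
  qed
  have "\<exists>C\<subseteq>?JA. finite C \<and> \<Union>C = X \<and> card C = min_subcover_card X ?JA"
    unfolding min_subcover_card_def by (rule LeastI_ex) (use ex in blast)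
  then obtain C where C: "C \<subseteq> ?JA" "finite C" "\<Union>C = X" "card C = min_subcover_card X ?JA"
    by blast
  have step: "\<exists>E'\<in>?JB. E \<subseteq> E'" if EJ: "E \<in> ?JA" and EN: "E \<noteq> {}" for E
  proof -
    obtain U where E: "E = (\<Inter>i\<in>{1..n}. U i) \<inter> X"
      and U: "\<forall>i\<in>{1..n}. U i \<in> preimage_cover X f (a i) \<A>"
      using EJ by (rule join_memE)
    obtain x0 where x0: "x0 \<in> E" using EN by blast
    have "\<exists>W\<in>\<B>. U i \<subseteq> {x\<in>X. fiter f 0 (a i) x \<in> W}" if i: "i \<in> {1..n}" for i
    proof -
      have "U i \<in> preimage_cover X f (a i) \<A>" using U i by blast
      then obtain V where V: "U i = {x\<in>X. fiter f 0 (a i) x \<in> V}" "V \<in> \<A>"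
        unfolding preimage_cover_def by (rule imageE)
      have "x0 \<in> U i" using x0 E i by auto
      then have "V \<noteq> {}" using V by auto
      then obtain W where W: "W \<in> \<B>" "V \<subseteq> W" using ref V(2) by blast
      have "U i \<subseteq> {x\<in>X. fiter f 0 (a i) x \<in> W}" using V(1) W(2) by auto
      then show ?thesis using W(1) by blast
    qed
    then have "\<forall>i\<in>{1..n}. \<exists>W. W \<in> \<B> \<and> U i \<subseteq> {x\<in>X. fiter f 0 (a i) x \<in> W}"
      by blast
    from bchoice[OF this] obtain W
      where W: "\<forall>i\<in>{1..n}. W i \<in> \<B> \<and> U i \<subseteq> {x\<in>X. fiter f 0 (a i) x \<in> W i}"
      by blast
    define U' where "U' i = {x\<in>X. fiter f 0 (a i) x \<in> W i}" for i
    have "(\<Inter>i\<in>{1..n}. U' i) \<inter> X \<in> ?JB"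
      unfolding U'_def by (intro join_memI pre_memI) (use W in blast)
    moreover have "E \<subseteq> (\<Inter>i\<in>{1..n}. U' i) \<inter> X"
    proof
      fix y assume y: "y \<in> E"
      have "y \<in> U' i" if "i \<in> {1..n}" for i
        using y E W that unfolding U'_def by blast
      then show "y \<in> (\<Inter>i\<in>{1..n}. U' i) \<inter> X" using y E by blast
    qed
    ultimately show ?thesis by blast
  qed
  then have "\<forall>E\<in>C. \<exists>E'. E \<noteq> {} \<longrightarrow> E' \<in> ?JB \<and> E \<subseteq> E'"
    using C(1) by blast
  from bchoice[OF this] obtain g where g: "\<forall>E\<in>C. E \<noteq> {} \<longrightarrow> g E \<in> ?JB \<and> E \<subseteq> g E"
    by blast
  define C' where "C' = g ` {E\<in>C. E \<noteq> {}}"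
  have "C' \<subseteq> ?JB" using g unfolding C'_def by auto
  moreover have "finite C'" using C(2) unfolding C'_def by auto
  moreover have "\<Union>C' = X"
  proof
    show "\<Union>C' \<subseteq> X" using \<open>C' \<subseteq> ?JB\<close> join_covers_X[where X=X and f=f, OF assms(3,5)] by blast
    show "X \<subseteq> \<Union>C'"
    proof
      fix x assume "x \<in> X"
      then obtain E where "E \<in> C" "x \<in> E" using C(3) by blast
      then have "x \<in> g E" "E \<noteq> {}" using g by blast+
      then show "x \<in> \<Union>C'" using \<open>E \<in> C\<close> unfolding C'_def by blast
    qed
  qed
  ultimately have C'p: "C' \<subseteq> ?JB \<and> finite C' \<and> \<Union>C' = X" by blast
  have "min_subcover_card X ?JB \<le> card C'"
    unfolding min_subcover_card_def by (rule Least_le, rule exI[of _ C']) (use C'p in simp)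
  also have "card C' \<le> card {E\<in>C. E \<noteq> {}}" unfolding C'_def by (rule card_image_le) (use C(2) in auto)
  also have "\<dots> \<le> card C" using C(2) by (intro card_mono) auto
  finally show ?thesis using C(4) by simp
qed

lemma hA_cover_mono:
  assumes "\<And>n. min_subcover_card X (join_covers X n (\<lambda>i. preimage_cover X f (a i) \<B>))
       \<le> min_subcover_card X (join_covers X n (\<lambda>i. preimage_cover X f (a i) \<A>))"
  shows "hA_cover X f a \<B> \<le> hA_cover X f a \<A>"
  unfolding hA_cover_def
proof (intro Limsup_mono always_eventually allI)
  fix n
  let ?p = "min_subcover_card X (join_covers X n (\<lambda>i. preimage_cover X f (a i) \<B>))"
  let ?q = "min_subcover_card X (join_covers X n (\<lambda>i. preimage_cover X f (a i) \<A>))"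
  have "ln (real ?p) \<le> ln (real ?q)"
  proof (cases "?p = 0")
    case True
    then show ?thesis by (cases "?q = 0") auto
  next
    case False
    then show ?thesis using assms[of n] by simp
  qed
  then show "ereal (ln (real ?p) / real n) \<le> ereal (ln (real ?q) / real n)"
    by (simp add: divide_right_mono)
qed

lemma lebesgue_cover:
  fixes X :: "'a::metric_space set"
  assumes "compact X" "open_cover X \<U>"
  obtains e where "e > 0" "\<And>x. x \<in> X \<Longrightarrow> \<exists>U\<in>\<U>. ball x e \<inter> X \<subseteq> U"
proof -
  define G where "G = {T. open T \<and> X \<inter> T \<in> \<U>}"
  have "X \<subseteq> \<Union>G"
  proof
    fix x assume x: "x \<in> X"
    then obtain U where U: "U \<in> \<U>" "x \<in> U" using assms(2) unfolding open_cover_def by blast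
    then obtain T where "open T" "U = X \<inter> T" using assms(2) unfolding open_cover_def
      by (meson openin_open)
    then show "x \<in> \<Union>G" using U unfolding G_def by blast
  qed
  then obtain e where e: "0 < e" "\<And>x. x \<in> X \<Longrightarrow> \<exists>T\<in>G. ball x e \<subseteq> T"
    using Heine_Borel_lemma[OF assms(1)] unfolding G_def by blast
  show ?thesis
  proof (rule that[OF e(1)])
    fix x assume "x \<in> X"
    then obtain T where "T \<in> G" "ball x e \<subseteq> T" using e(2) by blast
    then show "\<exists>U\<in>\<U>. ball x e \<inter> X \<subseteq> U" unfolding G_def by blast
  qed
qed

lemma diam_le_cover_diam:
  fixes X :: "'a::metric_space set"
  assumes "compact X" "open_cover X \<beta>" "V \<in> \<beta>"
  shows "diameter V \<le> cover_diam \<beta>"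
proof -
  have sub: "\<And>W. W \<in> \<beta> \<Longrightarrow> W \<subseteq> X" using assms(2) unfolding open_cover_def by blast
  have "bdd_above (diameter ` \<beta>)"
    using diameter_subset[OF sub compact_imp_bounded[OF assms(1)]]
    by (intro bdd_aboveI[of _ "diameter X"]) auto
  then show ?thesis unfolding cover_diam_def using assms(3) by (rule cSUP_upper2) simp
qed

theorem proposition2p4:
  fixes X :: "'a::metric_space set" and f :: "nat \<Rightarrow> 'a \<Rightarrow> 'a"
    and a :: "nat \<Rightarrow> nat" and \<alpha> :: "nat \<Rightarrow> 'a set set"
  assumes "compact X"
    and "\<And>n. continuous_on X (f n)" and "\<And>n. f n ` X \<subseteq> X"
    and "strict_mono_on {1..} a"
    and "\<And>n. open_cover X (\<alpha> n)"
    and "(\<lambda>n. cover_diam (\<alpha> n)) \<longlonglongrightarrow> 0"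
  shows "(\<lambda>n. hA_cover X f a (\<alpha> n)) \<longlonglongrightarrow> hA X f a
    \<and> ((\<lambda>\<delta>. SUP \<beta>\<in>{\<beta>. open_cover X \<beta> \<and> cover_diam \<beta> < \<delta>}. hA_cover X f a \<beta>)
           \<longlongrightarrow> hA X f a) (at_right 0)"
proof -
  have upper: "hA_cover X f a \<beta> \<le> hA X f a" if b: "open_cover X \<beta>" for \<beta>
  proof -
    have "\<forall>c\<in>\<beta>. openin (top_of_set X) c" "X \<subseteq> \<Union>\<beta>" using b unfolding open_cover_def by auto
    then have "\<exists>D\<subseteq>\<beta>. finite D \<and> X \<subseteq> \<Union>D"
      using compact_eq_openin_cover[THEN iffD1, OF assms(1), rule_format, of \<beta>] by blast
    then obtain D where D: "D \<subseteq> \<beta>" "finite D" "X \<subseteq> \<Union>D" by blast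
    have Dc: "open_cover X D" using D b unfolding open_cover_def by blast
    have "hA_cover X f a \<beta> \<le> hA_cover X f a D"
      by (intro hA_cover_mono refine_N[where X=X and f=f, OF assms(1,2,3) Dc b]) (use D in blast)
    also have "\<dots> \<le> hA X f a" unfolding hA_def using Dc D(2) by (intro SUP_upper) auto
    finally show ?thesis .
  qed
  have lower: "\<exists>e>0. \<forall>\<beta>. open_cover X \<beta> \<longrightarrow> cover_diam \<beta> < e \<longrightarrow> hA_cover X f a \<U> \<le> hA_cover X f a \<beta>"
    if U: "open_cover X \<U>" for \<U>
  proof -
    obtain e where e: "e > 0" "\<And>x. x \<in> X \<Longrightarrow> \<exists>U\<in>\<U>. ball x e \<inter> X \<subseteq> U"
      using lebesgue_cover[OF assms(1) U] by blast
    have "hA_cover X f a \<U> \<le> hA_cover X f a \<beta>" if b: "open_cover X \<beta>" "cover_diam \<beta> < e" for \<beta>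
    proof (intro hA_cover_mono refine_N[where X=X and f=f, OF assms(1,2,3) b(1) U])
      fix V assume V: "V \<in> \<beta>" "V \<noteq> {}"
      then obtain x where x: "x \<in> V" by blast
      have VX: "V \<subseteq> X" using V b unfolding open_cover_def by blast
      have dV: "diameter V < e" using diam_le_cover_diam[OF assms(1) b(1) V(1)] b(2) by simp
      have bV: "bounded V" using VX compact_imp_bounded[OF assms(1)] bounded_subset by blast
      have "V \<subseteq> ball x e"
      proof
        fix y assume "y \<in> V"
        then have "dist x y \<le> diameter V" using diameter_bounded_bound[OF bV x] by blast
        then show "y \<in> ball x e" using dV by simp
      qed
      then have "V \<subseteq> ball x e \<inter> X" using VX by blast
      then show "\<exists>W\<in>\<U>. V \<subseteq> W" using e(2)[of x] x VX by blast
    qed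
    then show ?thesis using e(1) by blast
  qed
  have c1: "(\<lambda>n. hA_cover X f a (\<alpha> n)) \<longlonglongrightarrow> hA X f a"
  proof (rule order_tendstoI)
    fix y assume "y < hA X f a"
    then obtain \<U> where U: "open_cover X \<U>" "y < hA_cover X f a \<U>"
      unfolding hA_def less_SUP_iff by blast
    obtain e where e: "e > 0" "\<And>\<beta>. open_cover X \<beta> \<Longrightarrow> cover_diam \<beta> < e \<Longrightarrow> hA_cover X f a \<U> \<le> hA_cover X f a \<beta>"
      using lower[OF U(1)] by blast
    have "eventually (\<lambda>n. cover_diam (\<alpha> n) < e) sequentially"
      using order_tendstoD(2)[OF assms(6) e(1)] .
    then show "eventually (\<lambda>n. y < hA_cover X f a (\<alpha> n)) sequentially"
    proof eventually_elim
      case (elim n)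
      have "hA_cover X f a \<U> \<le> hA_cover X f a (\<alpha> n)" using e(2)[OF assms(5) elim] .
      then show ?case using U(2) by (rule less_le_trans[rotated])
    qed
  next
    fix y assume "hA X f a < y"
    then show "eventually (\<lambda>n. hA_cover X f a (\<alpha> n) < y) sequentially"
    proof (intro always_eventually allI)
      fix n show "hA_cover X f a (\<alpha> n) < y" using upper[OF assms(5)] \<open>hA X f a < y\<close> by (rule le_less_trans)
    qed
  qed
  have c2: "((\<lambda>\<delta>. SUP \<beta>\<in>{\<beta>. open_cover X \<beta> \<and> cover_diam \<beta> < \<delta>}. hA_cover X f a \<beta>)
           \<longlongrightarrow> hA X f a) (at_right 0)"
  proof (rule order_tendstoI)
    fix y assume "y < hA X f a"
    then obtain \<U> where U: "open_cover X \<U>" "y < hA_cover X f a \<U>"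
      unfolding hA_def less_SUP_iff by blast
    obtain e where e: "e > 0" "\<And>\<beta>. open_cover X \<beta> \<Longrightarrow> cover_diam \<beta> < e \<Longrightarrow> hA_cover X f a \<U> \<le> hA_cover X f a \<beta>"
      using lower[OF U(1)] by blast
    show "eventually (\<lambda>\<delta>. y < (SUP \<beta>\<in>{\<beta>. open_cover X \<beta> \<and> cover_diam \<beta> < \<delta>}. hA_cover X f a \<beta>)) (at_right 0)"
      unfolding eventually_at_right_field
    proof (intro exI[of _ e] conjI allI impI)
      show "0 < e" by fact
      fix \<delta> :: real assume d: "0 < \<delta>" "\<delta> < e"
      have "eventually (\<lambda>n. cover_diam (\<alpha> n) < \<delta>) sequentially"
        using order_tendstoD(2)[OF assms(6) d(1)] .
      then obtain n where n: "cover_diam (\<alpha> n) < \<delta>" using eventually_sequentially by auto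
      have "y < hA_cover X f a \<U>" by fact
      also have "\<dots> \<le> hA_cover X f a (\<alpha> n)" using e(2)[OF assms(5)] n d by simp
      also have "\<dots> \<le> (SUP \<beta>\<in>{\<beta>. open_cover X \<beta> \<and> cover_diam \<beta> < \<delta>}. hA_cover X f a \<beta>)"
        using n assms(5) by (intro SUP_upper) auto
      finally show "y < (SUP \<beta>\<in>{\<beta>. open_cover X \<beta> \<and> cover_diam \<beta> < \<delta>}. hA_cover X f a \<beta>)" .
    qed
  next
    fix y assume y: "hA X f a < y"
    have "(SUP \<beta>\<in>{\<beta>. open_cover X \<beta> \<and> cover_diam \<beta> < \<delta>}. hA_cover X f a \<beta>) \<le> hA X f a" for \<delta> :: real
      using upper by (intro SUP_least) auto
    then show "eventually (\<lambda>\<delta>. (SUP \<beta>\<in>{\<beta>. open_cover X \<beta> \<and> cover_diam \<beta> < \<delta>}. hA_cover X f a \<beta>) < y) (at_right 0)"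
      using y by (intro always_eventually allI) (rule le_less_trans)
  qed
  show ?thesis using c1 c2 by blast
qed

end
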